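(* Let $n\ge 3$ and let $\mu$ be a symmetric measure on $L_n$. If $C^0_\mu<3$, then $$C_\mu=\max\{M_1(\mu),M_2(\mu),C^0_\mu\}.$$
   Context: $L_n$ is the path graph with vertices $\{1,\dots,n\}$ and edges $\{j,j+1\}$, with graph distance $d(i,j)=|i-j|$. A measure $\mu$ on $L_n$ is a weight function $\mu:\{1,\dots,n\}\to(0,\infty)$, $\mu(A)=\sum_{v\in A}\mu(v)$; it is symmetric if $\mu(j)=\mu(n+1-j)$ for all $j$. Closed balls: $B(x,r)=\{y:|x-y|\le r\}$. $C_\mu=\sup\{\mu(B(x,2k+1))/\mu(B(x,k)):1\le x\le n,\ k\in\{0,1,2,\dots\}\}$, $C^0_\mu=\max_x\mu(B(x,1))/\mu(x)$. Define $$M_1(\mu)=\sup\Big\{\frac{\mu(B(1,2k+1))}{\mu(B(1,k))}: k\in\mathbb Z,\ 0\le k<\Big\lceil\frac{n-2}{3}\Big\rceil\Big\},$$ $$M_2(\mu)=\sup\Big\{\frac{\mu(B(j,2k+1))}{\mu(B(j,k))}: j,k\in\mathbb Z,\ 1<j<\Big\lceil\frac n2\Big\rceil,\ \frac{\lceil n/2\rceil-j-1}{2}<k<\min\Big\{\frac{j-2}{2},\Big\lceil\frac{n-2j}{3}\Big\rceil,\Big\lceil\frac n2\Big\rceil-j\Big\}\Big\},$$ with the convention that the supremum of an empty set is $0$. *)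

theory Defs
  imports Complex_Main
begin

text \<open>Path graph L_n on vertices {1..n}; a measure is a weight function
  mu :: nat => real, positive on {1..n}.\<close>

definition is_measure :: "nat \<Rightarrow> (nat \<Rightarrow> real) \<Rightarrow> bool" where
  "is_measure n \<mu> \<longleftrightarrow> (\<forall>v\<in>{1..n}. \<mu> v > 0)"

definition symmetric_measure :: "nat \<Rightarrow> (nat \<Rightarrow> real) \<Rightarrow> bool" where
  "symmetric_measure n \<mu> \<longleftrightarrow> is_measure n \<mu> \<and> (\<forall>j\<in>{1..n}. \<mu> j = \<mu> (n + 1 - j))"

definition ball_L :: "nat \<Rightarrow> nat \<Rightarrow> int \<Rightarrow> nat set" where
  "ball_L n x r = {y\<in>{1..n}. \<bar>int x - int y\<bar> \<le> r}"

definition meas :: "(nat \<Rightarrow> real) \<Rightarrow> nat set \<Rightarrow> real" where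
  "meas \<mu> A = (\<Sum>v\<in>A. \<mu> v)"

definition ratio_L :: "nat \<Rightarrow> (nat \<Rightarrow> real) \<Rightarrow> nat \<Rightarrow> int \<Rightarrow> real" where
  "ratio_L n \<mu> x k = meas \<mu> (ball_L n x (2*k+1)) / meas \<mu> (ball_L n x k)"

definition sup0 :: "real set \<Rightarrow> real" where
  "sup0 S = (if S = {} then 0 else Sup S)"

definition C_mu :: "nat \<Rightarrow> (nat \<Rightarrow> real) \<Rightarrow> real" where
  "C_mu n \<mu> = sup0 {ratio_L n \<mu> x k | x k. x \<in> {1..n} \<and> k \<ge> 0}"

definition C0_mu :: "nat \<Rightarrow> (nat \<Rightarrow> real) \<Rightarrow> real" where
  "C0_mu n \<mu> = Max {meas \<mu> (ball_L n x 1) / \<mu> x | x. x \<in> {1..n}}"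

definition M1 :: "nat \<Rightarrow> (nat \<Rightarrow> real) \<Rightarrow> real" where
  "M1 n \<mu> = sup0 {ratio_L n \<mu> 1 k | k. 0 \<le> k \<and> k < \<lceil>(real n - 2) / 3\<rceil>}"

definition M2 :: "nat \<Rightarrow> (nat \<Rightarrow> real) \<Rightarrow> real" where
  "M2 n \<mu> = sup0 {ratio_L n \<mu> (nat j) k | j k.
      1 < j \<and> j < \<lceil>real n / 2\<rceil> \<and>
      (real_of_int (\<lceil>real n / 2\<rceil> - j - 1)) / 2 < real_of_int k \<and>
      real_of_int k < (real_of_int j - 2) / 2 \<and>
      k < \<lceil>(real n - 2 * real_of_int j) / 3\<rceil> \<and>
      k < \<lceil>real n / 2\<rceil> - j}"

end

theory Submission
  imports Defs
begin

definition ftl :: "nat \<Rightarrow> (nat \<Rightarrow> real) \<Rightarrow> int \<Rightarrow> real" where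
  "ftl n \<mu> y = (if 1 \<le> y \<and> y \<le> int n then \<mu> (nat y) else 0)"

lemma sum_int_Suc: "a \<le> b + 1 \<Longrightarrow> sum f {a..b+1::int} = sum f {a..b} + f (b+1)"
proof -
  assume "a \<le> b + 1"
  then have "{a..b+1} = insert (b+1) {a..b}" by auto
  then show ?thesis by (simp add: add.commute)
qed

lemma sum_int_split: "a \<le> m + 1 \<Longrightarrow> m \<le> b \<Longrightarrow> sum f {a..b::int} = sum f {a..m} + sum f {m+1..b}"
proof -
  assume "a \<le> m + 1" "m \<le> b"
  then have "{a..b} = {a..m} \<union> {m+1..b}" by auto
  moreover have "{a..m} \<inter> {m+1..b} = {}" by auto
  ultimately show ?thesis by (simp add: sum.union_disjoint)
qed

lemma ceil_half_sum:
  fixes w :: "nat \<Rightarrow> real"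
  assumes "\<And>t. w t \<ge> 0" and "k \<ge> 1"
  shows "(\<Sum>m<k. w ((m+1) div 2)) \<le> w 0 + 2 * (\<Sum>t\<in>{1..<k}. w t)"
proof -
  have ex: "(\<Sum>m<2*j+1. w ((m+1) div 2)) = w 0 + 2 * (\<Sum>t\<in>{1..j}. w t)" for j
  proof (induction j)
    case 0 then show ?case by simp
  next
    case (Suc j)
    have "(\<Sum>m<2*Suc j+1. w ((m+1) div 2)) = (\<Sum>m<2*j+1. w ((m+1) div 2)) + w ((2*j+2) div 2) + w ((2*j+3) div 2)"
      by (simp add: numeral_eq_Suc)
    also have "(2*j+2) div 2 = Suc j" by simp
    also have "(2*j+3) div 2 = Suc j" by simp
    finally show ?case using Suc by (simp add: algebra_simps)
  qed
  let ?j = "k div 2"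
  have "(\<Sum>m<k. w ((m+1) div 2)) \<le> (\<Sum>m<2*?j+1. w ((m+1) div 2))"
    by (rule sum_mono2) (auto simp: assms(1))
  also have "\<dots> = w 0 + 2 * (\<Sum>t\<in>{1..?j}. w t)" by (rule ex)
  also have "(\<Sum>t\<in>{1..?j}. w t) \<le> (\<Sum>t\<in>{1..<k}. w t)"
    by (rule sum_mono2) (use assms in auto)
  finally show ?thesis by simp
qed


lemma meas_ball: "meas \<mu> (ball_L n x r) = sum (ftl n \<mu>) {int x - r..int x + r}"
proof -
  let ?I = "{int x - r..int x + r} \<inter> {1..int n}"
  have "sum (ftl n \<mu>) {int x - r..int x + r} = sum (ftl n \<mu>) ?I"
    by (rule sum.mono_neutral_right) (auto simp: ftl_def)
  also have "\<dots> = sum (\<mu> \<circ> nat) ?I" by (rule sum.cong) (auto simp: ftl_def)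
  also have "\<dots> = sum \<mu> (nat ` ?I)"
    by (rule sum.reindex[symmetric]) (auto simp: inj_on_def)
  also have "nat ` ?I = ball_L n x r"
  proof
    show "nat ` ?I \<subseteq> ball_L n x r" unfolding ball_L_def by (auto simp: le_nat_iff)
    show "ball_L n x r \<subseteq> nat ` ?I"
    proof
      fix y assume "y \<in> ball_L n x r"
      then have "int y \<in> ?I" "y = nat (int y)" unfolding ball_L_def by auto
      then show "y \<in> nat ` ?I" by blast
    qed
  qed
  finally show ?thesis unfolding meas_def by simp
qed

locale pathm =
  fixes n :: nat and \<mu> :: "nat \<Rightarrow> real" and C :: real
  assumes pos: "\<And>v. v \<in> {1..n} \<Longrightarrow> \<mu> v > 0"
  and symm: "\<And>j. j \<in> {1..n} \<Longrightarrow> \<mu> j = \<mu> (n+1-j)"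
  and locb: "\<And>y::int. 1 \<le> y \<Longrightarrow> y \<le> int n \<Longrightarrow> ftl n \<mu> (y-1) + ftl n \<mu> y + ftl n \<mu> (y+1) \<le> C * ftl n \<mu> y"
  and C3: "C < 3"
begin

abbreviation "ft \<equiv> ftl n \<mu>"

lemma ft_nonneg: "ft y \<ge> 0"
proof (cases "1 \<le> y \<and> y \<le> int n")
  case True
  then have "nat y \<in> {1..n}" by (auto simp: le_nat_iff)
  then show ?thesis using True pos[of "nat y"] unfolding ftl_def by auto
qed (auto simp: ftl_def)

lemma ft_pos: "1 \<le> y \<Longrightarrow> y \<le> int n \<Longrightarrow> ft y > 0"
proof -
  assume a: "1 \<le> y" "y \<le> int n"
  then have "nat y \<in> {1..n}" by (auto simp: le_nat_iff)
  then show ?thesis using a pos[of "nat y"] unfolding ftl_def by auto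
qed

lemma ft_out: "y < 1 \<or> y > int n \<Longrightarrow> ft y = 0"
  unfolding ftl_def by auto

lemma ft_sym: "ft (int n + 1 - y) = ft y"
proof (cases "1 \<le> y \<and> y \<le> int n")
  case True
  then have "nat (int n + 1 - y) = n + 1 - nat y" by auto
  moreover have "nat y \<in> {1..n}" using True by auto
  ultimately show ?thesis using True symm[of "nat y"] unfolding ftl_def by auto
next
  case False then show ?thesis unfolding ftl_def by auto
qed

lemma conc1: "1 \<le> y \<Longrightarrow> y \<le> int n \<Longrightarrow> ft (y-1) + ft (y+1) \<le> 2 * ft y"
proof -
  assume a: "1 \<le> y" "y \<le> int n"
  have "ft (y-1) + ft (y+1) \<le> (C - 1) * ft y" using locb[OF a] by (simp add: algebra_simps)
  also have "\<dots> \<le> 2 * ft y" using C3 ft_pos[OF a] by (intro mult_right_mono) auto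
  finally show ?thesis .
qed

lemma delta_anti: "0 \<le> p \<Longrightarrow> q \<le> int n \<Longrightarrow> p \<le> q \<Longrightarrow> ft (q+1) - ft q \<le> ft (p+1) - ft p"
proof -
  assume a: "0 \<le> p" "q \<le> int n" "p \<le> q"
  have "p + int d \<le> int n \<longrightarrow> ft (p + int d + 1) - ft (p + int d) \<le> ft (p+1) - ft p" for d :: nat
  proof (induction d)
    case 0 then show ?case by simp
  next
    case (Suc d)
    show ?case
    proof (intro impI)
      assume h: "p + int (Suc d) \<le> int n"
      have "ft (p + int (Suc d) - 1) + ft (p + int (Suc d) + 1) \<le> 2 * ft (p + int (Suc d))"
        using h a by (intro conc1) auto
      then have "ft (p + int (Suc d) + 1) - ft (p + int (Suc d)) \<le> ft (p + int d + 1) - ft (p + int d)"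
        by (simp add: algebra_simps)
      also have "\<dots> \<le> ft (p+1) - ft p" using Suc h by auto
      finally show "ft (p + int (Suc d) + 1) - ft (p + int (Suc d)) \<le> ft (p+1) - ft p" .
    qed
  qed
  then have "ft (p + int (nat (q-p)) + 1) - ft (p + int (nat (q-p))) \<le> ft (p+1) - ft p"
    using a by (metis add.commute diff_add_cancel nat_0_le le_add_diff_inverse diff_ge_0_iff_ge)
  then show ?thesis using a by simp
qed

lemma conc_shift: "0 \<le> a \<Longrightarrow> a \<le> c \<Longrightarrow> c + int j \<le> int n + 1 \<Longrightarrow> ft (c + int j) - ft c \<le> ft (a + int j) - ft a"
proof (induction j)
  case 0 then show ?case by simp
next
  case (Suc j)
  have "ft (c + int j + 1) - ft (c + int j) \<le> ft (a + int j + 1) - ft (a + int j)"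
    using Suc.prems by (intro delta_anti) auto
  with Suc show ?case by (simp add: algebra_simps)
qed

lemma conc4: "0 \<le> a \<Longrightarrow> a \<le> b \<Longrightarrow> b \<le> c \<Longrightarrow> c \<le> d \<Longrightarrow> d \<le> int n + 1 \<Longrightarrow> a + d = b + c
  \<Longrightarrow> ft a + ft d \<le> ft b + ft c"
proof -
  assume h: "0 \<le> a" "a \<le> b" "b \<le> c" "c \<le> d" "d \<le> int n + 1" "a + d = b + c"
  have "ft (c + int (nat (d - c))) - ft c \<le> ft (a + int (nat (d - c))) - ft a"
    using h by (intro conc_shift) auto
  moreover have "c + int (nat (d - c)) = d" "a + int (nat (d - c)) = b" using h by auto
  ultimately show ?thesis by (simp only:)
qed

lemma mono_half: "0 \<le> p \<Longrightarrow> p \<le> q \<Longrightarrow> p + q \<le> int n + 1 \<Longrightarrow> ft p \<le> ft q"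
proof -
  assume a: "0 \<le> p" "p \<le> q" "p + q \<le> int n + 1"
  have key: "ft p' \<le> ft q'" if "0 \<le> p'" "p' \<le> q'" "2 * q' \<le> int n + 1" for p' q'
  proof -
    have "ft p' + ft (int n + 1 - p') \<le> ft q' + ft (int n + 1 - q')"
      using that by (intro conc4) auto
    then show ?thesis by (simp add: ft_sym)
  qed
  show ?thesis
  proof (cases "2 * q \<le> int n + 1")
    case True then show ?thesis using key a by auto
  next
    case False
    have "ft p \<le> ft (int n + 1 - q)" using a False by (intro key) auto
    then show ?thesis by (simp add: ft_sym)
  qed
qed

lemma MO: "0 \<le> a \<Longrightarrow> a \<le> int n + 1 \<Longrightarrow> min y (int n + 1 - y) \<le> min a (int n + 1 - a) \<Longrightarrow> ft y \<le> ft a"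
proof -
  assume a: "0 \<le> a" "a \<le> int n + 1" "min y (int n + 1 - y) \<le> min a (int n + 1 - a)"
  show ?thesis
  proof (cases "0 \<le> y \<and> y \<le> int n + 1")
    case False then show ?thesis using ft_out[of y] ft_nonneg[of a] by auto
  next
    case True
    define y' where "y' = min y (int n + 1 - y)"
    define a' where "a' = min a (int n + 1 - a)"
    have fy: "ft y = ft y'" unfolding y'_def using ft_sym[of y] by (auto simp: min_def)
    have fa: "ft a = ft a'" unfolding a'_def using ft_sym[of a] by (auto simp: min_def)
    have "ft y' \<le> ft a'" using a True unfolding y'_def a'_def by (intro mono_half) (auto simp: min_def)
    then show ?thesis using fy fa by simp
  qed
qed

lemma SA: "0 \<le> a \<Longrightarrow> a \<le> int n + 1 \<Longrightarrow> 0 \<le> b \<Longrightarrow> b \<le> int n + 1 \<Longrightarrow>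
  min y (int n + 1 - y) \<le> min a (int n + 1 - a) + min b (int n + 1 - b) \<Longrightarrow> ft y \<le> ft a + ft b"
proof -
  assume a: "0 \<le> a" "a \<le> int n + 1" "0 \<le> b" "b \<le> int n + 1"
    "min y (int n + 1 - y) \<le> min a (int n + 1 - a) + min b (int n + 1 - b)"
  define y' where "y' = min y (int n + 1 - y)"
  define a' where "a' = min a (int n + 1 - a)"
  define b' where "b' = min b (int n + 1 - b)"
  have fy: "ft y = ft y'" unfolding y'_def using ft_sym[of y] by (auto simp: min_def)
  have fa: "ft a = ft a'" unfolding a'_def using ft_sym[of a] by (auto simp: min_def)
  have fb: "ft b = ft b'" unfolding b'_def using ft_sym[of b] by (auto simp: min_def)
  have ya: "y' \<le> a' + b'" using a unfolding y'_def a'_def b'_def by simp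
  have a'r: "0 \<le> a'" "2 * a' \<le> int n + 1" using a unfolding a'_def by (auto simp: min_def)
  have b'r: "0 \<le> b'" "2 * b' \<le> int n + 1" using a unfolding b'_def by (auto simp: min_def)
  show ?thesis
  proof (cases "y' \<le> a' \<or> y' \<le> b'")
    case True
    then show ?thesis
    proof
      assume "y' \<le> a'"
      then have "ft y \<le> ft a" using a unfolding y'_def a'_def by (intro MO) auto
      then show ?thesis using ft_nonneg[of b] by simp
    next
      assume "y' \<le> b'"
      then have "ft y \<le> ft b" using a unfolding y'_def b'_def by (intro MO) auto
      then show ?thesis using ft_nonneg[of a] by simp
    qed
  next
    case False
    have "ft 0 + ft y' \<le> ft (min (y' - b') b') + ft (max (y' - b') b')"
      using False ya a'r b'r by (intro conc4) (auto simp: min_def max_def)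
    then have "ft y' \<le> ft (y' - b') + ft b'" using ft_out[of 0] by (auto simp: min_def max_def split: if_splits)
    also have "ft (y' - b') \<le> ft a'" using False ya a'r b'r by (intro mono_half) auto
    finally show ?thesis using fy fa fb by simp
  qed
qed


definition "SB x r = sum ft {x - r..x + r}"
definition "GG x t = ft (x - t) + ft (x + t)"

lemma SB_G: "SB x (int r) = ft x + (\<Sum>t\<in>{1..r}. GG x (int t))"
proof (induction r)
  case 0 then show ?case by (simp add: SB_def)
next
  case (Suc r)
  have e: "{x - int (Suc r)..x + int (Suc r)} = insert (x - int r - 1) (insert (x + int r + 1) {x - int r..x + int r})"
    by auto
  have "SB x (int (Suc r)) = ft (x - int r - 1) + ft (x + int r + 1) + SB x (int r)"
    unfolding SB_def e by simp
  then show ?case using Suc by (simp add: GG_def algebra_simps)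
qed

lemma Gbound:
  assumes "1 \<le> x" "2 * x \<le> int n + 1" "0 \<le> s'" "s' \<le> s" "s \<le> t" "x - s' \<ge> 0" "x + s \<le> int n + 1"
    "t > x \<Longrightarrow> s - s' \<ge> t - x"
  shows "GG x t \<le> ft (x - s') + ft (x + s)"
proof (cases "t \<le> x")
  case True
  have m1: "ft (x - t) \<le> ft (x - s')" using assms True by (intro MO) (auto simp: min_def)
  show ?thesis
  proof (cases "x + t \<le> int n + 1")
    case True2: True
    have "ft (x - t) + ft (x + t) \<le> ft (x - s) + ft (x + s)" using assms True True2 by (intro conc4) auto
    moreover have "ft (x - s) \<le> ft (x - s')" using assms True by (intro MO) (auto simp: min_def)
    ultimately show ?thesis unfolding GG_def by simp
  next
    case False
    then show ?thesis using m1 ft_out[of "x+t"] ft_nonneg[of "x+s"] unfolding GG_def by simp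
  qed
next
  case False
  have "ft (x + t) \<le> ft (x + s) + ft (x - s')"
    using assms False by (intro SA) (auto simp: min_def)
  then show ?thesis using ft_out[of "x - t"] False unfolding GG_def by simp
qed

lemma shift_m1: "(\<Sum>y\<in>{a..b::int}. g (y - 1)) = sum g {a - 1..b - 1}"
  by (rule sum.reindex_bij_witness[where i="\<lambda>y. y + 1" and j="\<lambda>y. y - 1"]) auto

lemma shift_p1: "(\<Sum>y\<in>{a..b::int}. g (y + 1)) = sum g {a + 1..b + 1}"
  by (rule sum.reindex_bij_witness[where i="\<lambda>y. y - 1" and j="\<lambda>y. y + 1"]) auto

lemma interior:
  fixes x :: int and k :: nat
  assumes k1: "k \<ge> 1" and xk: "x - int k \<ge> 2" and xn: "2 * x \<le> int n + 1"
  shows "SB x (2 * int k + 1) \<le> C * SB x (int k)"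
proof -
  have x1: "1 \<le> x" using xk k1 by simp
  have xkn: "x + int k \<le> int n - 1" using xk xn by simp
  have "(\<Sum>y\<in>{x - int k..x + int k}. ft (y-1) + ft y + ft (y+1)) \<le> (\<Sum>y\<in>{x - int k..x + int k}. C * ft y)"
    using xk xkn by (intro sum_mono locb) auto
  also have "\<dots> = C * SB x (int k)" by (simp add: SB_def sum_distrib_left)
  finally have T1: "(\<Sum>y\<in>{x - int k..x + int k}. ft (y-1) + ft y + ft (y+1)) \<le> C * SB x (int k)" .
  have T2: "(\<Sum>y\<in>{x - int k..x + int k}. ft (y-1) + ft y + ft (y+1)) =
     sum ft {x - int k - 1..x + int k - 1} + SB x (int k) + sum ft {x - int k + 1..x + int k + 1}"
    by (simp add: sum.distrib shift_m1 shift_p1 SB_def)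
  have SBk1: "SB x (int k + 1) = sum ft {x - int k - 1..x + int k - 1} + ft (x + int k) + ft (x + int k + 1)"
  proof -
    have "SB x (int k + 1) = sum ft {x - int k - 1..(x + int k) + 1}" by (simp add: SB_def algebra_simps)
    also have "\<dots> = sum ft {x - int k - 1..(x + int k - 1) + 1} + ft (x + int k + 1)"
      by (subst sum_int_Suc) (auto simp: algebra_simps)
    also have "sum ft {x - int k - 1..(x + int k - 1) + 1} = sum ft {x - int k - 1..x + int k - 1} + ft (x + int k)"
      by (subst sum_int_Suc) auto
    finally show ?thesis by simp
  qed
  have SBk2: "SB x (int k + 1) = ft (x - int k - 1) + ft (x - int k) + sum ft {x - int k + 1..x + int k + 1}"
  proof -
    have "SB x (int k + 1) = sum ft {x - int k - 1..x + int k + 1}" by (simp add: SB_def algebra_simps)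
    also have "\<dots> = sum ft {x - int k - 1..x - int k - 1} + sum ft {x - int k - 1 + 1..x + int k + 1}"
      by (rule sum_int_split) auto
    also have "sum ft {x - int k - 1 + 1..x + int k + 1} = sum ft {x - int k..x - int k} + sum ft {x - int k + 1..x + int k + 1}"
      by (simp add: sum_int_split[of "x - int k" "x - int k" "x + int k + 1"])
    finally show ?thesis by simp
  qed
  define Gs where "Gs r = (\<Sum>t\<in>{1..r}. GG x (int t))" for r
  have SB_Gs: "SB x (int r) = ft x + Gs r" for r unfolding Gs_def by (rule SB_G)
  have e1: "SB x (2 * int k + 1) = ft x + Gs (k+1) + (\<Sum>t\<in>{k+2..2*k+1}. GG x (int t))"
  proof -
    have "{1..2*k+1} = {1..k+1} \<union> {k+2..2*k+1}" by auto
    then have "Gs (2*k+1) = Gs (k+1) + (\<Sum>t\<in>{k+2..2*k+1}. GG x (int t))"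
      unfolding Gs_def by (simp add: sum.union_disjoint)
    moreover have "SB x (2 * int k + 1) = ft x + Gs (2*k+1)" using SB_Gs[of "2*k+1"] by (simp add: add.commute)
    ultimately show ?thesis by simp
  qed
  have e2: "Gs (k+1) = Gs k + GG x (1 + int k)" unfolding Gs_def by simp
  have e3: "Gs k = Gs (k-1) + GG x (int k)"
  proof -
    obtain k' where kk: "k = Suc k'" using k1 by (cases k) auto
    show ?thesis unfolding Gs_def kk by simp
  qed
  define c where "c m = (m + 1) div 2" for m :: nat
  have reidx: "(\<Sum>t\<in>{k+2..2*k+1}. GG x (int t)) = (\<Sum>m<k. GG x (int (2*k+1-m)))"
    by (rule sum.reindex_bij_witness[where i="\<lambda>t. 2*k+1-t" and j="\<lambda>m. 2*k+1-m"]) auto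
  have gb: "GG x (int (2*k+1-m)) \<le> ft (x - int (c m)) + ft (x + (int k - int (c m)))" if "m < k" for m
  proof -
    have cm: "2 * c m \<le> m + 1" "c m \<le> m" unfolding c_def by auto
    show ?thesis using that cm xk xkn xn x1
      by (intro Gbound) auto
  qed
  have L: "(\<Sum>m<k. ft (x - int (c m))) \<le> ft x + 2 * (\<Sum>t\<in>{1..<k}. ft (x - int t))"
    using ceil_half_sum[of "\<lambda>t. ft (x - int t)" k] k1 ft_nonneg unfolding c_def by simp
  have R0: "(\<Sum>m<k. ft (x + (int k - int (c m)))) \<le> ft (x + int k) + 2 * (\<Sum>t\<in>{1..<k}. ft (x + (int k - int t)))"
    using ceil_half_sum[of "\<lambda>t. ft (x + (int k - int t))" k] k1 ft_nonneg unfolding c_def by simp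
  have R1: "(\<Sum>t\<in>{1..<k}. ft (x + (int k - int t))) = (\<Sum>t\<in>{1..<k}. ft (x + int t))"
    by (rule sum.reindex_bij_witness[where i="\<lambda>t. k - t" and j="\<lambda>t. k - t"]) auto
  have G1: "Gs (k-1) = (\<Sum>t\<in>{1..<k}. ft (x - int t)) + (\<Sum>t\<in>{1..<k}. ft (x + int t))"
  proof -
    have "{1..k-1} = {1..<k}" using k1 by auto
    then show ?thesis unfolding Gs_def GG_def by (simp add: sum.distrib)
  qed
  have main: "(\<Sum>t\<in>{k+2..2*k+1}. GG x (int t)) \<le> 2 * ft x + 2 * Gs (k-1) + GG x (int k)"
  proof -
    have "(\<Sum>t\<in>{k+2..2*k+1}. GG x (int t)) \<le> (\<Sum>m<k. ft (x - int (c m)) + ft (x + (int k - int (c m))))"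
      unfolding reidx by (intro sum_mono gb) auto
    also have "\<dots> \<le> ft x + 2 * (\<Sum>t\<in>{1..<k}. ft (x - int t)) + (ft (x + int k) + 2 * (\<Sum>t\<in>{1..<k}. ft (x + int t)))"
      using L R0 R1 by (simp add: sum.distrib)
    also have "\<dots> \<le> 2 * ft x + 2 * Gs (k-1) + GG x (int k)"
      unfolding G1 GG_def using ft_nonneg[of x] ft_nonneg[of "x - int k"] by simp
    finally show ?thesis .
  qed
  have "SB x (2 * int k + 1) \<le> (\<Sum>y\<in>{x - int k..x + int k}. ft (y-1) + ft y + ft (y+1))"
  proof -
    have s1: "SB x (int k + 1) = ft x + Gs (k+1)" using SB_Gs[of "k+1"] by (simp add: add.commute)
    have s0: "SB x (int k) = ft x + Gs k" by (rule SB_Gs)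
    have g1: "GG x (1 + int k) = ft (x - int k - 1) + ft (x + int k + 1)" by (simp add: GG_def algebra_simps)
    have g0: "GG x (int k) = ft (x - int k) + ft (x + int k)" by (simp add: GG_def)
    show ?thesis unfolding T2 e1 using SBk1 SBk2 s1 s0 g1 g0 e2 e3 main by linarith
  qed
  with T1 show ?thesis by simp
qed

definition "AA m = sum ft {1..m}"

lemma sum_left: "a \<le> 1 \<Longrightarrow> sum ft {a..b} = AA b"
  unfolding AA_def by (rule sum.mono_neutral_right) (auto intro: ft_out)

lemma AA_mono: "b \<le> b' \<Longrightarrow> AA b \<le> AA b'"
  unfolding AA_def by (rule sum_mono2) (auto simp: ft_nonneg)

lemma AA_pos: "1 \<le> m \<Longrightarrow> 1 \<le> n \<Longrightarrow> AA m > 0"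
proof -
  assume a: "1 \<le> m" "1 \<le> n"
  have "ft 1 \<le> AA m" unfolding AA_def using a by (intro member_le_sum) (auto simp: ft_nonneg)
  moreover have "ft 1 > 0" using a by (intro ft_pos) auto
  ultimately show ?thesis by simp
qed

lemma AA_Suc: "0 \<le> b \<Longrightarrow> AA (b + 1) = AA b + ft (b + 1)"
  unfolding AA_def by (rule sum_int_Suc) auto

lemma bnd_above: "(\<And>j. j \<in> {a..b} \<Longrightarrow> ft j \<le> K) \<Longrightarrow> sum ft {a..b::int} \<le> real (nat (b - a + 1)) * K"
  using sum_bounded_above[of "{a..b}" ft K] by simp

lemma bnd_below: "(\<And>j. j \<in> {a..b} \<Longrightarrow> K \<le> ft j) \<Longrightarrow> real (nat (b - a + 1)) * K \<le> sum ft {a..b::int}"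
  using sum_bounded_below[of "{a..b}" K ft] by simp

lemma mono1:
  fixes k :: nat
  assumes k1: "k \<ge> 1" and nk: "int n \<le> 3 * int k + 2"
  shows "AA (2 * int k + 2) * AA (int k) \<le> AA (2 * int k) * AA (int k + 1)"
proof -
  define b where "b = ft (int k + 1)"
  define V where "V = ft (2 * int k + 1) + ft (2 * int k + 2)"
  have e1: "AA (2 * int k + 2) = AA (2 * int k) + V"
    using AA_Suc[of "2 * int k"] AA_Suc[of "2 * int k + 1"] unfolding V_def by (simp add: algebra_simps)
  have e2: "AA (int k + 1) = AA (int k) + b" using AA_Suc[of "int k"] unfolding b_def by simp
  have Ak0: "AA (int k) \<ge> 0" unfolding AA_def by (intro sum_nonneg) (auto simp: ft_nonneg)
  have A2k0: "AA (2 * int k) \<ge> 0" unfolding AA_def by (intro sum_nonneg) (auto simp: ft_nonneg)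
  have key: "V * AA (int k) \<le> AA (2 * int k) * b"
  proof (cases "2 * int k + 1 > int n")
    case True
    then have "V = 0" unfolding V_def using ft_out by auto
    then show ?thesis using A2k0 ft_nonneg[of "int k + 1"] unfolding b_def by simp
  next
    case False
    have f22: "ft (2 * int k + 2) \<le> b" unfolding b_def using False nk by (intro MO) (auto simp: min_def)
    define Sg where "Sg = sum ft {int k + 1..2 * int k}"
    have A2k: "AA (2 * int k) = AA (int k) + Sg" unfolding AA_def Sg_def
      by (rule sum_int_split) auto
    have Sg0: "Sg \<ge> 0" unfolding Sg_def by (intro sum_nonneg) (auto simp: ft_nonneg)
    have b0: "b \<ge> 0" unfolding b_def by (rule ft_nonneg)
    show ?thesis
    proof (cases "int n \<le> 3 * int k + 1")
      case True
      have Ak: "AA (int k) \<le> real k * b" unfolding AA_def b_def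
        using bnd_above[of 1 "int k" b] False unfolding b_def by (force intro: MO simp: min_def)
      have Sk: "real k * ft (2 * int k + 1) \<le> Sg" unfolding Sg_def
        using bnd_below[of "int k + 1" "2 * int k" "ft (2 * int k + 1)"] True False
        by (force intro: MO simp: min_def)
      have c0: "ft (2 * int k + 1) \<ge> 0" by (rule ft_nonneg)
      have "V * AA (int k) \<le> (ft (2 * int k + 1) + b) * AA (int k)"
        unfolding V_def using f22 Ak0 by (intro mult_right_mono) auto
      also have "\<dots> = ft (2 * int k + 1) * AA (int k) + b * AA (int k)" by (simp add: algebra_simps)
      also have "\<dots> \<le> ft (2 * int k + 1) * (real k * b) + b * AA (int k)"
        using Ak c0 by (simp add: mult_left_mono)
      also have "\<dots> = (real k * ft (2 * int k + 1)) * b + b * AA (int k)" by (simp add: algebra_simps)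
      also have "\<dots> \<le> Sg * b + b * AA (int k)" using Sk b0 by (simp add: mult_right_mono)
      also have "\<dots> = AA (2 * int k) * b" using A2k by (simp add: algebra_simps)
      finally show ?thesis .
    next
      case False2: False
      have n3: "int n = 3 * int k + 2" using False2 nk by simp
      define c2 where "c2 = ft (int k + 2)"
      have c20: "c2 \<ge> 0" unfolding c2_def by (rule ft_nonneg)
      have V2: "V = c2 + b"
      proof -
        have h1: "int n + 1 - (int k + 2) = 2 * int k + 1" using n3 by simp
        have h2: "int n + 1 - (int k + 1) = 2 * int k + 2" using n3 by simp
        have "ft (2 * int k + 1) = c2" using ft_sym[of "int k + 2"] unfolding h1 c2_def .
        moreover have "ft (2 * int k + 2) = b" using ft_sym[of "int k + 1"] unfolding h2 b_def .
        ultimately show ?thesis unfolding V_def by simp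
      qed
      have Sg2: "Sg \<ge> b + real (k - 1) * c2"
      proof -
        have "Sg = ft (int k + 1) + sum ft {int k + 2..2 * int k}" unfolding Sg_def
          using sum_int_split[of "int k + 1" "int k + 1" "2 * int k" ft] k1 by (simp add: add.commute)
        moreover have "real (nat (2 * int k - (int k + 2) + 1)) * c2 \<le> sum ft {int k + 2..2 * int k}"
          unfolding c2_def using n3 by (intro bnd_below) (auto intro!: MO simp: min_def)
        moreover have "real (nat (2 * int k - (int k + 2) + 1)) = real (k - 1)" using k1 by auto
        ultimately show ?thesis unfolding b_def by simp
      qed
      have Ak2: "AA (int k) \<le> real (k - 1) * b + ft (int k)"
      proof -
        have "AA (int k) = AA (int k - 1) + ft (int k)" using AA_Suc[of "int k - 1"] k1 by simp
        moreover have "AA (int k - 1) \<le> real (nat (int k - 1 - 1 + 1)) * b" unfolding AA_def b_def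
          using n3 by (intro bnd_above) (auto intro!: MO simp: min_def)
        moreover have "real (nat (int k - 1 - 1 + 1)) = real (k - 1)" using k1 by auto
        ultimately show ?thesis by simp
      qed
      have cc: "ft (int k) + c2 \<le> 2 * b"
        using conc1[of "int k + 1"] n3 unfolding c2_def b_def by (simp add: algebra_simps)
      have Akb: "AA (int k) \<le> real (k - 1) * b + 2 * b - c2" using Ak2 cc by simp
      have "c2 * AA (int k) \<le> c2 * (real (k - 1) * b + 2 * b - c2)" using Akb c20 by (rule mult_left_mono)
      also have "\<dots> \<le> b * (b + real (k - 1) * c2)"
      proof -
        have "0 \<le> (b - c2) * (b - c2)" by simp
        then show ?thesis by (simp add: algebra_simps)
      qed
      also have "\<dots> \<le> b * Sg" using Sg2 b0 by (rule mult_left_mono)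
      finally have "c2 * AA (int k) \<le> b * Sg" .
      then show ?thesis unfolding V2 A2k by (simp add: algebra_simps)
    qed
  qed
  show ?thesis unfolding e1 e2 using key by (simp add: algebra_simps)
qed

lemma SB_pos: "1 \<le> x \<Longrightarrow> x \<le> int n \<Longrightarrow> 0 \<le> r \<Longrightarrow> SB x r > 0"
proof -
  assume a: "1 \<le> x" "x \<le> int n" "0 \<le> r"
  have "ft x \<le> SB x r" unfolding SB_def using a by (intro member_le_sum) (auto simp: ft_nonneg)
  moreover have "ft x > 0" using a by (intro ft_pos)
  ultimately show ?thesis by simp
qed

lemma SB_sym: "SB (int n + 1 - x) r = SB x r"
proof -
  have "SB (int n + 1 - x) r = (\<Sum>y\<in>{x - r..x + r}. ft (int n + 1 - y))"
    unfolding SB_def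
    by (rule sum.reindex_bij_witness[where i="\<lambda>y. int n + 1 - y" and j="\<lambda>y. int n + 1 - y"]) auto
  also have "\<dots> = SB x r" unfolding SB_def by (simp add: ft_sym)
  finally show ?thesis .
qed

lemma R1:
  fixes M :: real and K0 :: nat
  assumes K01: "K0 \<ge> 1" and K0n: "int n \<le> 3 * int K0 + 2" and n1: "n \<ge> 1"
    and hM: "\<And>m. m < K0 \<Longrightarrow> AA (2 * int m + 2) / AA (int m + 1) \<le> M"
  shows "AA (2 * int m + 2) / AA (int m + 1) \<le> M"
proof (induction m rule: less_induct)
  case (less m)
  show ?case
  proof (cases "m < K0")
    case True then show ?thesis by (rule hM)
  next
    case False
    then have m1: "m \<ge> 1" "int n \<le> 3 * int m + 2" using K01 K0n by auto
    have mono: "AA (2 * int m + 2) * AA (int m) \<le> AA (2 * int m) * AA (int m + 1)"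
      by (rule mono1[OF m1])
    have p1: "AA (int m) > 0" "AA (int m + 1) > 0" using m1 n1 by (auto intro!: AA_pos)
    have "AA (2 * int m + 2) / AA (int m + 1) \<le> AA (2 * int m) / AA (int m)"
      using mono p1 by (simp add: field_simps)
    also have "\<dots> \<le> M"
    proof -
      have IH: "AA (2 * int (m - 1) + 2) / AA (int (m - 1) + 1) \<le> M" using m1 by (intro less.IH) auto
      have eq: "int (m - 1) = int m - 1" using m1 by simp
      show ?thesis using IH unfolding eq by (simp add: algebra_simps)
    qed
    finally show ?thesis .
  qed
qed

lemma mainb:
  fixes M :: real and K0 :: nat
  assumes K01: "K0 \<ge> 1" and K0n: "int n \<le> 3 * int K0 + 2" and n1: "n \<ge> 1"
    and hM: "\<And>m. m < K0 \<Longrightarrow> AA (2 * int m + 2) / AA (int m + 1) \<le> M"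
    and CM: "C \<le> M"
    and x: "1 \<le> x" "x \<le> int n"
  shows "SB x (2 * int k + 1) / SB x (int k) \<le> M"
proof -
  have wlog: "SB x (2 * int k + 1) / SB x (int k) \<le> M" if x': "1 \<le> x" "x \<le> int n" "2 * x \<le> int n + 1" for x
  proof -
    have pk: "SB x (int k) > 0" using x' by (intro SB_pos) auto
    show ?thesis
    proof (cases "k = 0")
      case True
      have "SB x 1 = ft (x - 1) + ft x + ft (x + 1)"
      proof -
        have "{x - 1..x + 1} = {x - 1, x, x + 1}" by auto
        then show ?thesis unfolding SB_def by simp
      qed
      moreover have "SB x 0 = ft x" unfolding SB_def by simp
      ultimately have "SB x 1 \<le> C * SB x 0" using locb[OF x'(1,2)] by simp
      then have "SB x 1 / SB x 0 \<le> C" using pk True by (simp add: divide_le_eq)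
      then show ?thesis using True CM by simp
    next
      case False
      then have k1: "k \<ge> 1" by simp
      show ?thesis
      proof (cases "x - int k \<le> 1")
        case True
        define m where "m = nat (x + int k - 1)"
        have mm: "int m = x + int k - 1" unfolding m_def using x' by simp
        have d: "SB x (int k) = AA (int m + 1)" unfolding SB_def mm using True by (simp add: sum_left)
        have u: "SB x (2 * int k + 1) = AA (x + 2 * int k + 1)" unfolding SB_def using True
          by (simp add: sum_left add.assoc)
        have "AA (x + 2 * int k + 1) \<le> AA (2 * int m + 2)" unfolding mm using x' by (intro AA_mono) simp
        then have "SB x (2 * int k + 1) / SB x (int k) \<le> AA (2 * int m + 2) / AA (int m + 1)"
          unfolding u d using pk d by (intro divide_right_mono) auto
        also have "\<dots> \<le> M" by (rule R1[OF K01 K0n n1 hM])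
        finally show ?thesis .
      next
        case False
        have "SB x (2 * int k + 1) \<le> C * SB x (int k)" using False x' k1 by (intro interior) auto
        then have "SB x (2 * int k + 1) / SB x (int k) \<le> C" using pk by (simp add: divide_le_eq)
        then show ?thesis using CM by simp
      qed
    qed
  qed
  show ?thesis
  proof (cases "2 * x \<le> int n + 1")
    case True then show ?thesis using wlog x by simp
  next
    case False
    have "SB (int n + 1 - x) (2 * int k + 1) / SB (int n + 1 - x) (int k) \<le> M"
      using False x by (intro wlog) auto
    then show ?thesis by (simp add: SB_sym)
  qed
qed
end

theorem theorem5p1:
  fixes n :: nat and \<mu> :: "nat \<Rightarrow> real"
  assumes "n \<ge> 3"
    and "symmetric_measure n \<mu>"
    and "C0_mu n \<mu> < 3"
  shows "C_mu n \<mu> = Max {M1 n \<mu>, M2 n \<mu>, C0_mu n \<mu>}"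
proof -
  note n3 = assms(1)
  have posm: "\<And>v. v \<in> {1..n} \<Longrightarrow> \<mu> v > 0" using assms(2) unfolding symmetric_measure_def is_measure_def by auto
  have symm: "\<And>j. j \<in> {1..n} \<Longrightarrow> \<mu> j = \<mu> (n+1-j)" using assms(2) unfolding symmetric_measure_def by auto
  define C0 where "C0 = C0_mu n \<mu>"
  define S0 where "S0 = {meas \<mu> (ball_L n x 1) / \<mu> x | x. x \<in> {1..n}}"
  have S0i: "S0 = (\<lambda>x. meas \<mu> (ball_L n x 1) / \<mu> x) ` {1..n}" unfolding S0_def by auto
  have S0f: "finite S0" unfolding S0i by simp
  have C0M: "C0 = Max S0" unfolding C0_def C0_mu_def S0_def ..
  have locb: "ftl n \<mu> (y-1) + ftl n \<mu> y + ftl n \<mu> (y+1) \<le> C0 * ftl n \<mu> y" if y: "1 \<le> y" "y \<le> int n" for y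
  proof -
    have xin: "nat y \<in> {1..n}" using y by (auto simp: le_nat_iff)
    have "meas \<mu> (ball_L n (nat y) 1) / \<mu> (nat y) \<in> S0" unfolding S0_def using xin by blast
    then have le: "meas \<mu> (ball_L n (nat y) 1) / \<mu> (nat y) \<le> C0" unfolding C0M using S0f by (rule Max_ge[rotated])
    have "meas \<mu> (ball_L n (nat y) 1) = sum (ftl n \<mu>) {y - 1..y + 1}" using y by (simp add: meas_ball)
    also have "{y - 1..y + 1} = {y - 1, y, y + 1}" by auto
    finally have m: "meas \<mu> (ball_L n (nat y) 1) = ftl n \<mu> (y-1) + ftl n \<mu> y + ftl n \<mu> (y+1)" by simp
    have fy: "ftl n \<mu> y = \<mu> (nat y)" using y by (simp add: ftl_def)
    have p: "\<mu> (nat y) > 0" using posm xin .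
    show ?thesis using le p unfolding m fy by (simp add: divide_le_eq)
  qed
  interpret P: pathm n \<mu> C0
    using posm symm locb assms(3) unfolding C0_def by unfold_locales auto
  have ratioSB: "ratio_L n \<mu> x k = P.SB (int x) (2 * k + 1) / P.SB (int x) k" for x k
    unfolding ratio_L_def P.SB_def meas_ball ..
  define q where "q = \<lceil>(real n - 2) / 3\<rceil>"
  define K0 where "K0 = nat q"
  have q1: "q \<ge> 1" unfolding q_def using n3 by (simp add: le_ceiling_iff)
  have K01: "K0 \<ge> 1" unfolding K0_def using q1 by simp
  have K0n: "int n \<le> 3 * int K0 + 2"
  proof -
    have "(real n - 2) / 3 \<le> real_of_int q" unfolding q_def by (rule le_of_int_ceiling)
    then show ?thesis unfolding K0_def using q1 by simp
  qed
  define S1 where "S1 = {ratio_L n \<mu> 1 k | k. 0 \<le> k \<and> k < q}"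
  have S1i: "S1 = (\<lambda>k. ratio_L n \<mu> 1 k) ` {0..<q}" unfolding S1_def by auto
  have S1f: "finite S1" unfolding S1i by simp
  have S1ne: "S1 \<noteq> {}" unfolding S1i using q1 by auto
  have M1e: "M1 n \<mu> = Sup S1" unfolding M1_def sup0_def S1_def[symmetric] q_def[symmetric] using S1ne by simp
  have r1: "ratio_L n \<mu> 1 (int m) = P.AA (2 * int m + 2) / P.AA (int m + 1)" for m
    unfolding ratioSB P.SB_def by (simp add: P.sum_left add.commute)
  define Mx where "Mx = max (M1 n \<mu>) C0"
  have hM: "P.AA (2 * int m + 2) / P.AA (int m + 1) \<le> Mx" if "m < K0" for m
  proof -
    have "ratio_L n \<mu> 1 (int m) \<in> S1" unfolding S1_def using that K0_def by auto
    then have "ratio_L n \<mu> 1 (int m) \<le> Sup S1" using S1f by (intro cSup_upper) (auto intro: bdd_above_finite)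
    then show ?thesis unfolding r1 Mx_def M1e by simp
  qed
  define X where "X = {ratio_L n \<mu> x k | x k. x \<in> {1..n} \<and> k \<ge> 0}"
  have Cm: "C_mu n \<mu> = sup0 X" unfolding C_mu_def X_def ..
  have Xb: "z \<le> Mx" if zX: "z \<in> X" for z
  proof -
    obtain x k where xk: "z = ratio_L n \<mu> x k" "x \<in> {1..n}" "k \<ge> 0" using zX unfolding X_def by auto
    have "P.SB (int x) (2 * int (nat k) + 1) / P.SB (int x) (int (nat k)) \<le> Mx"
      using xk n3 by (intro P.mainb[OF K01 K0n _ hM]) (auto simp: Mx_def)
    then show ?thesis using xk unfolding ratioSB by simp
  qed
  have Xne: "X \<noteq> {}"
  proof -
    have "ratio_L n \<mu> 1 0 \<in> X" unfolding X_def using n3 by force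
    then show ?thesis by blast
  qed
  have Xbdd: "bdd_above X" using Xb by (auto simp: bdd_above_def)
  have Cle: "C_mu n \<mu> \<le> Mx" unfolding Cm sup0_def using Xne Xb by (simp add: cSup_least)
  have X0: "z \<ge> 0" if "z \<in> X" for z
  proof -
    obtain x k where xk: "z = ratio_L n \<mu> x k" using \<open>z \<in> X\<close> unfolding X_def by auto
    have "meas \<mu> A \<ge> 0" if "A \<subseteq> {1..n}" for A
      unfolding meas_def using that posm by (intro sum_nonneg) (force intro: less_imp_le)
    moreover have "ball_L n x r \<subseteq> {1..n}" for r unfolding ball_L_def by auto
    ultimately show ?thesis unfolding xk ratio_L_def by simp
  qed
  have SupX: "z \<le> Sup X" if "z \<in> X" for z using that Xbdd by (rule cSup_upper)
  have SX0: "0 \<le> Sup X" using Xne X0 SupX by force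
  have M1le: "M1 n \<mu> \<le> Sup X"
  proof -
    have "S1 \<subseteq> X" unfolding S1_def X_def using n3 by force
    then show ?thesis unfolding M1e using S1ne Xbdd by (rule cSup_subset_mono[rotated -1])
  qed
  have M2le: "M2 n \<mu> \<le> Sup X"
  proof -
    define S2 where "S2 = {ratio_L n \<mu> (nat j) k | j k.
      1 < j \<and> j < \<lceil>real n / 2\<rceil> \<and>
      (real_of_int (\<lceil>real n / 2\<rceil> - j - 1)) / 2 < real_of_int k \<and>
      real_of_int k < (real_of_int j - 2) / 2 \<and>
      k < \<lceil>(real n - 2 * real_of_int j) / 3\<rceil> \<and>
      k < \<lceil>real n / 2\<rceil> - j}"
    have M2e: "M2 n \<mu> = sup0 S2" unfolding M2_def S2_def ..
    have sub: "S2 \<subseteq> X"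
    proof
      fix z assume "z \<in> S2"
      then obtain j k where jk: "z = ratio_L n \<mu> (nat j) k" "1 < j" "j < \<lceil>real n / 2\<rceil>"
        "(real_of_int (\<lceil>real n / 2\<rceil> - j - 1)) / 2 < real_of_int k"
        unfolding S2_def by blast
      have "\<lceil>real n / 2\<rceil> \<le> int n" by (simp add: ceiling_le_iff)
      then have "nat j \<in> {1..n}" using jk by auto
      moreover have "k \<ge> 0"
      proof -
        have "0 \<le> real_of_int (\<lceil>real n / 2\<rceil> - j - 1) / 2" using jk by simp
        then have "0 < real_of_int k" using jk(4) by (rule le_less_trans)
        then show ?thesis by simp
      qed
      ultimately show "z \<in> X" unfolding X_def jk(1) by blast
    qed
    show ?thesis
    proof (cases "S2 = {}")
      case True then show ?thesis unfolding M2e sup0_def using SX0 by simp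
    next
      case False
      then have "Sup S2 \<le> Sup X" using sub Xbdd by (intro cSup_subset_mono) auto
      then show ?thesis unfolding M2e sup0_def using False by simp
    qed
  qed
  have C0le: "C0 \<le> Sup X"
  proof -
    have S0ne: "S0 \<noteq> {}" unfolding S0i using n3 by auto
    have "Max S0 \<in> S0" using S0f S0ne by (rule Max_in)
    then obtain x where x: "x \<in> {1..n}" "C0 = meas \<mu> (ball_L n x 1) / \<mu> x" unfolding S0_def C0M by auto
    have "ball_L n x 0 = {x}" using x unfolding ball_L_def by auto
    then have "C0 = ratio_L n \<mu> x 0" unfolding x ratio_L_def by (simp add: meas_def)
    then have "C0 \<in> X" unfolding X_def using x by auto
    then show ?thesis by (rule SupX)
  qed
  have CX: "C_mu n \<mu> = Sup X" unfolding Cm sup0_def using Xne by simp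
  have "Max {M1 n \<mu>, M2 n \<mu>, C0_mu n \<mu>} = max (M1 n \<mu>) (max (M2 n \<mu>) C0)" unfolding C0_def by simp
  moreover have "max (M1 n \<mu>) (max (M2 n \<mu>) C0) = Sup X"
    using Cle M1le M2le C0le CX unfolding Mx_def max_def by (smt (verit))
  ultimately show ?thesis using CX by simp
qed

end
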